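(* Let $(G,k)$ be an instance of PITVD, let $S\subseteq V(G)$ be such that $G-S$ is a simple (prop-int, tree)-graph, and let $V_1$ be the set of vertices of the connected components of $G-S$ that contain a cycle. Let $\mathcal{B}$ be the bipartite graph with one side $S$ and the other side the set $\mathcal{C}$ of connected components of $G[V_1]$, where $s\in S$ is adjacent to $D\in\mathcal{C}$ iff $s$ has a neighbor in $D$ in $G$. Suppose $\widehat{S}\subseteq S$ and $\widehat{\mathcal{C}}\subseteq\mathcal{C}$ are non-empty sets such that (i) there is a $3$-expansion of $\widehat{S}$ into $\widehat{\mathcal{C}}$ in $\mathcal{B}$, and (ii) $N_{\mathcal{B}}(\widehat{\mathcal{C}})\subseteq\widehat{S}$. Then $(G,k)$ is a yes-instance of PITVD if and only if $(G-\widehat{S},k-|\widehat{S}|)$ is a yes-instance of PITVD.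
   Context: PITVD: the input is an undirected multigraph $G$ (no self-loops) and an integer $k$; the question is whether there exists $X\subseteq V(G)$ with $|X|\le k$ such that $G-X$ is a simple graph and every connected component of $G-X$ is a proper interval graph or a tree. A simple graph is a (prop-int, tree)-graph if each component is a proper interval graph or a tree. For a bipartite graph with sides $A,B$ and $\widehat{A}\subseteq A$, $\widehat{B}\subseteq B$, a set $M$ of edges is a $q$-expansion of $\widehat{A}$ into $\widehat{B}$ if every vertex of $\widehat{A}$ is incident to exactly $q$ edges of $M$ and exactly $q|\widehat{A}|$ vertices of $\widehat{B}$ are incident to edges of $M$. *)

theory Defs
  imports Complex_Main
begin

text \<open>An undirected multigraph without self-loops: a vertex set together with an
  edge-multiplicity function.\<close>
type_synonym 'a mgraph = "'a set \<times> ('a \<Rightarrow> 'a \<Rightarrow> nat)"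

definition verts :: "'a mgraph \<Rightarrow> 'a set" where "verts G = fst G"
definition mult :: "'a mgraph \<Rightarrow> 'a \<Rightarrow> 'a \<Rightarrow> nat" where "mult G = snd G"

definition multigraph :: "'a mgraph \<Rightarrow> bool" where
  "multigraph G \<longleftrightarrow> finite (verts G)
     \<and> (\<forall>u v. mult G u v = mult G v u)
     \<and> (\<forall>v. mult G v v = 0)
     \<and> (\<forall>u v. mult G u v > 0 \<longrightarrow> u \<in> verts G \<and> v \<in> verts G)"

definition adj :: "'a mgraph \<Rightarrow> 'a \<Rightarrow> 'a \<Rightarrow> bool" where
  "adj G u v \<longleftrightarrow> u \<in> verts G \<and> v \<in> verts G \<and> mult G u v > 0"

definition induced :: "'a mgraph \<Rightarrow> 'a set \<Rightarrow> 'a mgraph" where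
  "induced G X = (verts G \<inter> X, \<lambda>u v. if u \<in> X \<and> v \<in> X then mult G u v else 0)"

definition del_verts :: "'a mgraph \<Rightarrow> 'a set \<Rightarrow> 'a mgraph" where
  "del_verts G X = induced G (verts G - X)"

definition simple :: "'a mgraph \<Rightarrow> bool" where
  "simple G \<longleftrightarrow> (\<forall>u v. mult G u v \<le> 1)"

definition reach :: "'a mgraph \<Rightarrow> 'a \<Rightarrow> 'a \<Rightarrow> bool" where
  "reach G u v \<longleftrightarrow> u \<in> verts G \<and> (adj G)\<^sup>*\<^sup>* u v"

definition components :: "'a mgraph \<Rightarrow> 'a set set" where
  "components G = {{v. reach G u v} | u. u \<in> verts G}"

definition connected_graph :: "'a mgraph \<Rightarrow> bool" where
  "connected_graph G \<longleftrightarrow> verts G \<noteq> {} \<and> (\<forall>u\<in>verts G. \<forall>v\<in>verts G. reach G u v)"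

definition has_cycle :: "'a mgraph \<Rightarrow> bool" where
  "has_cycle G \<longleftrightarrow> (\<exists>xs. length xs \<ge> 3 \<and> distinct xs \<and> set xs \<subseteq> verts G
      \<and> (\<forall>i < length xs. adj G (xs ! i) (xs ! ((i + 1) mod length xs))))"

definition is_tree :: "'a mgraph \<Rightarrow> bool" where
  "is_tree G \<longleftrightarrow> connected_graph G \<and> \<not> has_cycle G"

definition proper_interval :: "'a mgraph \<Rightarrow> bool" where
  "proper_interval G \<longleftrightarrow> simple G \<and> (\<exists>l r :: 'a \<Rightarrow> real.
      (\<forall>v\<in>verts G. l v \<le> r v)
    \<and> (\<forall>u\<in>verts G. \<forall>v\<in>verts G. u \<noteq> v \<longrightarrow>
          (adj G u v \<longleftrightarrow> {l u..r u} \<inter> {l v..r v} \<noteq> {}))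
    \<and> (\<forall>u\<in>verts G. \<forall>v\<in>verts G. \<not> ({l v..r v} \<subset> {l u..r u})))"

definition pit_graph :: "'a mgraph \<Rightarrow> bool" where
  "pit_graph G \<longleftrightarrow> simple G \<and>
     (\<forall>C\<in>components G. proper_interval (induced G C) \<or> is_tree (induced G C))"

definition PITVD :: "'a mgraph \<Rightarrow> int \<Rightarrow> bool" where
  "PITVD G k \<longleftrightarrow> (\<exists>X \<subseteq> verts G. int (card X) \<le> k \<and> pit_graph (del_verts G X))"

definition q_expansion ::
  "('a \<Rightarrow> 'b \<Rightarrow> bool) \<Rightarrow> 'a set \<Rightarrow> 'b set \<Rightarrow> 'a set \<Rightarrow> 'b set \<Rightarrow> nat \<Rightarrow> ('a \<times> 'b) set \<Rightarrow> bool" where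
  "q_expansion E A B Ahat Bhat q M \<longleftrightarrow>
      M \<subseteq> {(a, b). a \<in> A \<and> b \<in> B \<and> E a b}
    \<and> (\<forall>a\<in>Ahat. card {e \<in> M. fst e = a} = q)
    \<and> card {b \<in> Bhat. \<exists>a. (a, b) \<in> M} = q * card Ahat"

end

theory Submission
  imports Defs
begin


lemma verts_induced[simp]: "verts (induced G A) = verts G \<inter> A"
  by (simp add: induced_def verts_def)
lemma mult_induced: "mult (induced G A) u v = (if u \<in> A \<and> v \<in> A then mult G u v else 0)"
  by (simp add: induced_def mult_def)
lemma adj_induced[simp]: "adj (induced G A) u v \<longleftrightarrow> u \<in> A \<and> v \<in> A \<and> adj G u v"
  by (auto simp: adj_def mult_induced)
lemma induced_induced: "induced (induced G A) B = induced G (A \<inter> B)"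
  unfolding induced_def verts_def mult_def by (auto intro!: ext)
lemma del_del: "del_verts (del_verts G A) B = del_verts G (A \<union> B)"
  unfolding del_verts_def induced_induced by (rule arg_cong[where f="induced G"]) auto

lemma adj_verts: "adj G u v \<Longrightarrow> u \<in> verts G \<and> v \<in> verts G" by (simp add: adj_def)

lemma rt_verts: "(adj G)\<^sup>*\<^sup>* u v \<Longrightarrow> u \<in> verts G \<Longrightarrow> v \<in> verts G"
  by (induction rule: rtranclp_induct) (auto simp: adj_def)

lemma comp_closed_rt:
  assumes "K \<in> components H" "y \<in> K" "(adj H)\<^sup>*\<^sup>* y z" shows "z \<in> K"
proof -
  from assms(1) obtain u where u: "u \<in> verts H" "K = {v. reach H u v}" by (auto simp: components_def)
  then show ?thesis using assms(2,3) by (auto simp: reach_def)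
qed

lemma comp_closed:
  assumes "K \<in> components H" "y \<in> K" "adj H y z" shows "z \<in> K"
  using comp_closed_rt[OF assms(1,2)] assms(3) by blast

lemma comp_sub: "K \<in> components H \<Longrightarrow> K \<subseteq> verts H"
  by (auto simp: components_def reach_def intro: rt_verts)

lemma comp_ne: "K \<in> components H \<Longrightarrow> K \<noteq> {}"
  by (auto simp: components_def reach_def)

lemma comp_of: "u \<in> verts H \<Longrightarrow> {v. reach H u v} \<in> components H"
  by (auto simp: components_def)

lemma comp_of_mem: "u \<in> verts H \<Longrightarrow> u \<in> {v. reach H u v}"
  by (auto simp: reach_def)

lemma comp_reach:
  assumes "symp (adj H)" "K \<in> components H" "y \<in> K" "z \<in> K" shows "(adj H)\<^sup>*\<^sup>* y z"
proof -
  from assms(2) obtain u where u: "u \<in> verts H" "K = {v. reach H u v}" by (auto simp: components_def)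
  have "(adj H)\<^sup>*\<^sup>* u y" "(adj H)\<^sup>*\<^sup>* u z" using u assms(3,4) by (auto simp: reach_def)
  then have "(adj H)\<^sup>*\<^sup>* y u" using assms(1) by (metis sympD symp_rtranclp)
  then show ?thesis using \<open>(adj H)\<^sup>*\<^sup>* u z\<close> by simp
qed

lemma comp_disj:
  assumes "symp (adj H)" "K1 \<in> components H" "K2 \<in> components H" "x \<in> K1" "x \<in> K2"
  shows "K1 = K2"
proof -
  have "K1 \<subseteq> K2" using comp_reach[OF assms(1,2,4)] comp_closed_rt[OF assms(3,5)] by blast
  moreover have "K2 \<subseteq> K1" using comp_reach[OF assms(1,3,5)] comp_closed_rt[OF assms(2,4)] by blast
  ultimately show ?thesis by blast
qed

lemma rt_lift:
  assumes "R\<^sup>*\<^sup>* a b" "\<And>y z. R\<^sup>*\<^sup>* a y \<Longrightarrow> R y z \<Longrightarrow> Q y z" shows "Q\<^sup>*\<^sup>* a b"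
  using assms(1,2)
proof (induction rule: rtranclp_induct)
  case base then show ?case by simp
next
  case (step y z) then show ?case by (meson rtranclp.rtrancl_into_rtrancl)
qed

lemma comp_connected:
  assumes "symp (adj H)" "K \<in> components H" shows "connected_graph (induced H K)"
  unfolding connected_graph_def
proof (intro conjI ballI)
  show "verts (induced H K) \<noteq> {}" using comp_sub[OF assms(2)] comp_ne[OF assms(2)] by auto
next
  fix y z assume "y \<in> verts (induced H K)" "z \<in> verts (induced H K)"
  then have yz: "y \<in> K" "z \<in> K" by auto
  have "(adj (induced H K))\<^sup>*\<^sup>* y z"
    apply (rule rt_lift[OF comp_reach[OF assms yz]])
    using comp_closed_rt[OF assms(2) yz(1)] comp_closed[OF assms(2)] by auto
  then show "reach (induced H K) y z" using \<open>y \<in> verts (induced H K)\<close> by (simp add: reach_def)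
qed

lemma pi_hered: "proper_interval H \<Longrightarrow> proper_interval (induced H A)"
  unfolding proper_interval_def simple_def by (auto simp: mult_induced) blast

lemma cycle_mono:
  assumes "has_cycle H1" "verts H1 \<subseteq> verts H2" "\<And>u v. adj H1 u v \<Longrightarrow> adj H2 u v"
  shows "has_cycle H2"
  using assms unfolding has_cycle_def by blast

lemma tree_hered:
  assumes "is_tree (induced H A)" "B \<subseteq> A" "connected_graph (induced H B)"
  shows "is_tree (induced H B)"
  using assms cycle_mono[of "induced H B" "induced H A"] unfolding is_tree_def by auto

lemma symp_adj: "multigraph G \<Longrightarrow> symp (adj (induced G A))"
  unfolding symp_def multigraph_def by (auto simp: adj_def mult_induced)

lemma claw:
  fixes l r :: "'a \<Rightarrow> real"
  assumes "l s \<le> r s" "l a \<le> r a" "l b \<le> r b" "l c \<le> r c"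
   "{l s..r s} \<inter> {l a..r a} \<noteq> {}" "{l s..r s} \<inter> {l b..r b} \<noteq> {}" "{l s..r s} \<inter> {l c..r c} \<noteq> {}"
   "{l a..r a} \<inter> {l b..r b} = {}" "{l a..r a} \<inter> {l c..r c} = {}" "{l b..r b} \<inter> {l c..r c} = {}"
   "\<not> {l a..r a} \<subset> {l s..r s}" "\<not> {l b..r b} \<subset> {l s..r s}" "\<not> {l c..r c} \<subset> {l s..r s}"
  shows False
proof -
  have iff: "\<And>p q x y::real. p \<le> q \<Longrightarrow> x \<le> y \<Longrightarrow> {p..q} \<inter> {x..y} = {} \<longleftrightarrow> \<not> (p \<le> y \<and> x \<le> q)"
    by (auto simp: set_eq_iff) (metis nle_le)
  have ps: "\<And>p q x y::real. p \<le> q \<Longrightarrow> {p..q} \<subset> {x..y} \<longleftrightarrow> x \<le> p \<and> q \<le> y \<and> (x < p \<or> q < y)"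
    by (auto simp: atLeastatMost_psubset_iff)
  show False using assms unfolding iff[OF assms(1) assms(2)] iff[OF assms(1) assms(3)] iff[OF assms(1) assms(4)]
    iff[OF assms(2) assms(3)] iff[OF assms(2) assms(4)] iff[OF assms(3) assms(4)] ps[OF assms(2)] ps[OF assms(3)] ps[OF assms(4)]
    by (smt (verit))
qed



lemma rt_closed:
  assumes "R\<^sup>*\<^sup>* a b" "P a" "\<And>y z. R\<^sup>*\<^sup>* a y \<Longrightarrow> P y \<Longrightarrow> R y z \<Longrightarrow> P z" shows "P b"
  using assms(1)
proof (induction rule: rtranclp_induct)
  case base show ?case using assms(2) .
next
  case (step y z) then show ?case using assms(3) by blast
qed

theorem lemma33:
  fixes G :: "'a mgraph" and k :: int and S Shat :: "'a set"
    and V1 :: "'a set" and Cs Chat :: "'a set set"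
    and adjB :: "'a \<Rightarrow> 'a set \<Rightarrow> bool"
  assumes "multigraph G"
    and "S \<subseteq> verts G"
    and "pit_graph (del_verts G S)"
    and "V1 = \<Union>{C \<in> components (del_verts G S). has_cycle (induced (del_verts G S) C)}"
    and "Cs = components (induced G V1)"
    and "adjB = (\<lambda>s D. s \<in> S \<and> D \<in> Cs \<and> (\<exists>d\<in>D. adj G s d))"
    and "Shat \<subseteq> S" and "Chat \<subseteq> Cs" and "Shat \<noteq> {}" and "Chat \<noteq> {}"
    and "\<exists>M. q_expansion adjB S Cs Shat Chat 3 M"
    and "{s \<in> S. \<exists>D\<in>Chat. adjB s D} \<subseteq> Shat"
  shows "PITVD G k \<longleftrightarrow> PITVD (del_verts G Shat) (k - int (card Shat))"
proof -
  define G' where "G' = induced G (verts G - S)"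
  have G'eq: "del_verts G S = G'" by (simp add: del_verts_def G'_def)
  define VC where "VC = \<Union>Chat"
  have fin: "finite (verts G)" using assms(1) by (simp add: multigraph_def)
  have symG: "\<And>A. symp (adj (induced G A))" by (rule symp_adj[OF assms(1)])
  have symG': "symp (adj G')" unfolding G'_def by (rule symG)
  have adjsym: "\<And>u v. adj G u v \<Longrightarrow> adj G v u" using assms(1) by (auto simp: adj_def multigraph_def)
  have pitG': "pit_graph G'" using assms(3) G'eq by simp
  have V1sub: "V1 \<subseteq> verts G - S"
    using comp_sub[of _ G'] unfolding assms(4) G'eq G'_def by auto
  have Cs_char: "D \<in> components G' \<and> has_cycle (induced G' D)" if "D \<in> Cs" for D
  proof -
    from that obtain u where u: "u \<in> verts G \<inter> V1" "D = {v. reach (induced G V1) u v}"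
      using assms(5) by (auto simp: components_def)
    then obtain C where C: "C \<in> components G'" "has_cycle (induced G' C)" "u \<in> C"
      using assms(4) G'eq by auto
    have CV1: "C \<subseteq> V1" using C assms(4) G'eq by auto
    have "D \<subseteq> C"
    proof
      fix v assume "v \<in> D"
      hence "(adj (induced G V1))\<^sup>*\<^sup>* u v" using u by (simp add: reach_def)
      hence "(adj G')\<^sup>*\<^sup>* u v" by (rule rt_lift) (use V1sub in \<open>auto simp: G'_def\<close>)
      thus "v \<in> C" using comp_closed_rt[OF C(1) C(3)] by blast
    qed
    moreover have "C \<subseteq> D"
    proof
      fix v assume "v \<in> C"
      have "(adj G')\<^sup>*\<^sup>* u v" by (rule comp_reach[OF symG' C(1) C(3) \<open>v\<in>C\<close>])
      hence "(adj (induced G V1))\<^sup>*\<^sup>* u v"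
      proof (rule rt_lift)
        fix y z assume "(adj G')\<^sup>*\<^sup>* u y" "adj G' y z"
        then have "y \<in> C" "z \<in> C" using comp_closed_rt[OF C(1) C(3)] comp_closed[OF C(1)] by blast+
        then show "adj (induced G V1) y z" using CV1 \<open>adj G' y z\<close> by (auto simp: G'_def)
      qed
      thus "v \<in> D" using u by (simp add: reach_def)
    qed
    ultimately show ?thesis using C by auto
  qed
  have Cs_comp: "D \<in> components G'" if "D \<in> Cs" for D using Cs_char[OF that] by blast
  have Cs_pi: "proper_interval (induced G' D)" if "D \<in> Cs" for D
    using Cs_char[OF that] pitG' unfolding pit_graph_def is_tree_def by blast
  have Cs_sub: "D \<subseteq> verts G - S" if "D \<in> Cs" for D
    using comp_sub[of D G'] Cs_char[OF that] by (auto simp: G'_def)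
  have Chat_Cs: "\<And>D. D \<in> Chat \<Longrightarrow> D \<in> Cs" using assms(8) by blast
  have stay: "z \<in> D" if "D \<in> Chat" "y \<in> D" "adj G y z" "z \<notin> Shat" for D y z
  proof (cases "z \<in> S")
    case True
    then have "adjB z D" using assms(6) that adjsym Chat_Cs by blast
    then show ?thesis using assms(12) that True by blast
  next
    case False
    then have "adj G' y z" using that Cs_sub[OF Chat_Cs[OF that(1)]] adj_verts[OF that(3)] by (auto simp: G'_def)
    then show ?thesis using comp_closed[OF Cs_comp[OF Chat_Cs[OF that(1)]] that(2)] by blast
  qed
  have nadj: "\<not> adj G d d' \<and> d \<noteq> d'" if "D \<in> Cs" "D' \<in> Cs" "D \<noteq> D'" "d \<in> D" "d' \<in> D'" for D D' d d'
  proof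
    show "d \<noteq> d'"
    proof
      assume "d = d'"
      then have "d \<in> D'" using that(5) by simp
      then have "D = D'" by (rule comp_disj[OF symG' Cs_comp[OF that(1)] Cs_comp[OF that(2)] that(4)])
      then show False using that(3) by simp
    qed
    show "\<not> adj G d d'"
    proof
      assume "adj G d d'"
      then have "adj G' d d'" using Cs_sub that by (auto simp: G'_def)
      then have "d' \<in> D" by (rule comp_closed[OF Cs_comp[OF that(1)] that(4)])
      then have "D = D'" by (rule comp_disj[OF symG' Cs_comp[OF that(1)] Cs_comp[OF that(2)] _ that(5)])
      then show False using that(3) by simp
    qed
  qed
  have noclaw: False if X: "X \<subseteq> verts G" "pit_graph (del_verts G X)" and s: "s \<in> S" "s \<notin> X"
    and D: "D1 \<in> Cs" "D2 \<in> Cs" "D3 \<in> Cs" "D1 \<noteq> D2" "D1 \<noteq> D3" "D2 \<noteq> D3"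
    "D1 \<inter> X = {}" "D2 \<inter> X = {}" "D3 \<inter> X = {}"
    and d: "d1 \<in> D1" "d2 \<in> D2" "d3 \<in> D3" "adj G s d1" "adj G s d2" "adj G s d3"
    for X s D1 D2 D3 d1 d2 d3
  proof -
    define H where "H = induced G (verts G - X)"
    have pitH: "pit_graph H" using X(2) by (simp add: H_def del_verts_def)
    have sH: "s \<in> verts H" using s assms(2) by (auto simp: H_def)
    define K where "K = {v. reach H s v}"
    have K: "K \<in> components H" unfolding K_def by (rule comp_of[OF sH])
    have dverts: "d \<in> verts G" "d \<notin> X" "d \<notin> S" if "d \<in> Di" "Di \<in> Cs" "Di \<inter> X = {}" for d Di
      using that Cs_sub by auto
    have adjH: "adj H s d" if "d \<in> Di" "Di \<in> Cs" "Di \<inter> X = {}" "adj G s d" for d Di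
      using that dverts[OF that(1-3)] s assms(2) by (auto simp: H_def)
    have inK: "d \<in> K" if "d \<in> Di" "Di \<in> Cs" "Di \<inter> X = {}" "adj G s d" for d Di
      using adjH[OF that] sH by (auto simp: K_def reach_def)
    have D1K: "D1 \<subseteq> K"
    proof
      fix v assume "v \<in> D1"
      have "(adj G')\<^sup>*\<^sup>* d1 v" by (rule comp_reach[OF symG' Cs_comp[OF D(1)] d(1) \<open>v \<in> D1\<close>])
      hence "(adj H)\<^sup>*\<^sup>* d1 v"
      proof (rule rt_lift)
        fix y z assume "(adj G')\<^sup>*\<^sup>* d1 y" "adj G' y z"
        then have "y \<in> D1" "z \<in> D1" using comp_closed_rt[OF Cs_comp[OF D(1)] d(1)] comp_closed[OF Cs_comp[OF D(1)]] by blast+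
        then show "adj H y z" using \<open>adj G' y z\<close> D(7) by (auto simp: G'_def H_def)
      qed
      then have "(adj H)\<^sup>*\<^sup>* s v" using adjH[OF d(1) D(1) D(7) d(4)] by simp
      then show "v \<in> K" using sH by (simp add: K_def reach_def)
    qed
    have cyc: "has_cycle (induced H K)"
    proof (rule cycle_mono)
      show "has_cycle (induced G' D1)" using Cs_char[OF D(1)] by blast
      show "verts (induced G' D1) \<subseteq> verts (induced H K)"
        using D1K D(7) Cs_sub[OF D(1)] by (auto simp: G'_def H_def)
      show "adj (induced H K) u v" if "adj (induced G' D1) u v" for u v
        using that D1K D(7) by (auto simp: G'_def H_def)
    qed
    then have "proper_interval (induced H K)"
      using pitH K unfolding pit_graph_def is_tree_def by blast
    then obtain l r :: "'a \<Rightarrow> real" where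
      lr: "\<forall>v\<in>verts (induced H K). l v \<le> r v"
      "\<forall>u\<in>verts (induced H K). \<forall>v\<in>verts (induced H K). u \<noteq> v \<longrightarrow>
          (adj (induced H K) u v \<longleftrightarrow> {l u..r u} \<inter> {l v..r v} \<noteq> {})"
      "\<forall>u\<in>verts (induced H K). \<forall>v\<in>verts (induced H K). \<not> ({l v..r v} \<subset> {l u..r u})"
      unfolding proper_interval_def by blast
    have sK: "s \<in> K" using comp_of_mem[OF sH] by (simp add: K_def)
    have vs: "s \<in> verts (induced H K)" "d1 \<in> verts (induced H K)" "d2 \<in> verts (induced H K)" "d3 \<in> verts (induced H K)"
      using sK sH inK[OF d(1) D(1) D(7) d(4)] inK[OF d(2) D(2) D(8) d(5)] inK[OF d(3) D(3) D(9) d(6)]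
        comp_sub[OF K] by auto
    have a: "adj (induced H K) s d1" "adj (induced H K) s d2" "adj (induced H K) s d3"
      using vs adjH[OF d(1) D(1) D(7) d(4)] adjH[OF d(2) D(2) D(8) d(5)] adjH[OF d(3) D(3) D(9) d(6)] by auto
    have na: "\<not> adj (induced H K) d1 d2" "\<not> adj (induced H K) d1 d3" "\<not> adj (induced H K) d2 d3"
      "d1 \<noteq> d2" "d1 \<noteq> d3" "d2 \<noteq> d3"
      using nadj[OF D(1) D(2) D(4) d(1) d(2)] nadj[OF D(1) D(3) D(5) d(1) d(3)] nadj[OF D(2) D(3) D(6) d(2) d(3)]
      by (auto simp: H_def)
    have sd: "s \<noteq> d1" "s \<noteq> d2" "s \<noteq> d3" using s d Cs_sub D by blast+
    have iv: "l x \<le> r x" if "x \<in> verts (induced H K)" for x using lr(1) that by blast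
    have ia: "adj (induced H K) u v \<longleftrightarrow> {l u..r u} \<inter> {l v..r v} \<noteq> {}"
      if "u \<in> verts (induced H K)" "v \<in> verts (induced H K)" "u \<noteq> v" for u v
      using lr(2) that by blast
    have ic: "\<not> ({l v..r v} \<subset> {l u..r u})"
      if "u \<in> verts (induced H K)" "v \<in> verts (induced H K)" for u v
      using lr(3) that by blast
    have m1: "{l s..r s} \<inter> {l d1..r d1} \<noteq> {}" using ia[OF vs(1) vs(2) sd(1)] a(1) by simp
    have m2: "{l s..r s} \<inter> {l d2..r d2} \<noteq> {}" using ia[OF vs(1) vs(3) sd(2)] a(2) by simp
    have m3: "{l s..r s} \<inter> {l d3..r d3} \<noteq> {}" using ia[OF vs(1) vs(4) sd(3)] a(3) by simp
    have n1: "{l d1..r d1} \<inter> {l d2..r d2} = {}" using ia[OF vs(2) vs(3) na(4)] na(1) by simp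
    have n2: "{l d1..r d1} \<inter> {l d3..r d3} = {}" using ia[OF vs(2) vs(4) na(5)] na(2) by simp
    have n3: "{l d2..r d2} \<inter> {l d3..r d3} = {}" using ia[OF vs(3) vs(4) na(6)] na(3) by simp
    show False
      by (rule claw[OF iv[OF vs(1)] iv[OF vs(2)] iv[OF vs(3)] iv[OF vs(4)] m1 m2 m3 n1 n2 n3
            ic[OF vs(1) vs(2)] ic[OF vs(1) vs(3)] ic[OF vs(1) vs(4)]])
  qed
  obtain M where M: "q_expansion adjB S Cs Shat Chat 3 M" using assms(11) by blast
  have finS: "finite S" using fin assms(2) finite_subset by blast
  have finShat: "finite Shat" using finS assms(7) finite_subset by blast
  have finCs: "finite Cs"
  proof -
    have "Cs \<subseteq> Pow (verts G)" using comp_sub[of _ "induced G V1"] assms(5) by auto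
    then show ?thesis using fin finite_subset by blast
  qed
  have finChat: "finite Chat" using finCs assms(8) finite_subset by blast
  have Msub: "M \<subseteq> S \<times> Cs" using M unfolding q_expansion_def by auto
  have finM: "finite M" using Msub finS finCs finite_subset by blast
  define M' where "M' = {e \<in> M. fst e \<in> Shat}"
  have finM': "finite M'" using finM by (simp add: M'_def)
  have Mb: "a \<in> Shat" if "(a, b) \<in> M" "b \<in> Chat" for a b
  proof -
    have "adjB a b" using that M unfolding q_expansion_def by auto
    then show ?thesis using assms(12) assms(6) that by blast
  qed
  have cardM': "card M' = 3 * card Shat"
  proof -
    have eq: "M' = (\<Union>a\<in>Shat. {e \<in> M. fst e = a})" by (auto simp: M'_def)
    have "card M' = (\<Sum>a\<in>Shat. card {e \<in> M. fst e = a})"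
      unfolding eq by (rule card_UN_disjoint) (use finShat finM in auto)
    also have "\<dots> = (\<Sum>a\<in>Shat. 3)" using M unfolding q_expansion_def by simp
    finally show ?thesis by simp
  qed
  define B where "B = {b \<in> Chat. \<exists>a. (a, b) \<in> M}"
  have cardB: "card B = 3 * card Shat" using M unfolding q_expansion_def B_def by simp
  have Bsub: "B \<subseteq> snd ` M'" unfolding B_def M'_def using Mb by force
  have finB: "finite B" using finChat by (simp add: B_def)
  have le1: "card (snd ` M') \<le> card M'" by (rule card_image_le[OF finM'])
  have le2: "card B \<le> card (snd ` M')" by (rule card_mono) (use finM' Bsub in auto)
  have injM': "inj_on snd M'"
    by (rule eq_card_imp_inj_on[OF finM']) (use le1 le2 cardM' cardB in linarith)
  have BM': "B = snd ` M'"
  proof (rule card_subset_eq[OF finite_imageI[OF finM'] Bsub])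
    show "card B = card (snd ` M')" using le1 le2 cardM' cardB by linarith
  qed
  have M'Chat: "b \<in> Chat" if "(a, b) \<in> M" "a \<in> Shat" for a b
  proof -
    have "b \<in> snd ` M'" using that by (force simp: M'_def)
    then show ?thesis using BM' by (auto simp: B_def)
  qed
  have hit: "\<exists>D. (s, D) \<in> M \<and> D \<inter> X \<noteq> {}"
    if X: "X \<subseteq> verts G" "pit_graph (del_verts G X)" and s: "s \<in> Shat" "s \<notin> X" for X s
  proof (rule ccontr)
    assume none: "\<not> (\<exists>D. (s, D) \<in> M \<and> D \<inter> X \<noteq> {})"
    have "card {e \<in> M. fst e = s} = 3" using M s unfolding q_expansion_def by auto
    then obtain e1 e2 e3 where e: "{e \<in> M. fst e = s} = {e1, e2, e3}" "e1 \<noteq> e2" "e2 \<noteq> e3" "e1 \<noteq> e3"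
      unfolding card_3_iff by blast
    have eM: "e1 \<in> M" "e2 \<in> M" "e3 \<in> M" "fst e1 = s" "fst e2 = s" "fst e3 = s"
      using e(1) by blast+
    define D1 D2 D3 where "D1 = snd e1" "D2 = snd e2" "D3 = snd e3"
    have sD: "(s, D1) \<in> M" "(s, D2) \<in> M" "(s, D3) \<in> M" using eM unfolding D1_D2_D3_def
      by (metis prod.collapse)+
    have Dne: "D1 \<noteq> D2" "D1 \<noteq> D3" "D2 \<noteq> D3" using e eM unfolding D1_D2_D3_def
      by (metis prod.collapse)+
    have ab: "adjB s D1" "adjB s D2" "adjB s D3" using sD M unfolding q_expansion_def by auto
    then obtain d1 d2 d3 where dd: "d1 \<in> D1" "d2 \<in> D2" "d3 \<in> D3" "adj G s d1" "adj G s d2" "adj G s d3"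
      and DC: "D1 \<in> Cs" "D2 \<in> Cs" "D3 \<in> Cs"
      unfolding assms(6) by blast
    have DX: "D1 \<inter> X = {}" "D2 \<inter> X = {}" "D3 \<inter> X = {}" using none sD by blast+
    have sS: "s \<in> S" using s(1) assms(7) by blast
    show False by (rule noclaw[OF X sS s(2) DC Dne DX dd])
  qed
  have card_bound: "card (Shat - X) \<le> card (X \<inter> VC)"
    if X: "X \<subseteq> verts G" "pit_graph (del_verts G X)" for X
  proof -
    define f where "f s = (SOME x. \<exists>D. (s, D) \<in> M \<and> x \<in> D \<inter> X)" for s
    have fP: "\<exists>D. (s, D) \<in> M \<and> f s \<in> D \<inter> X" if "s \<in> Shat - X" for s
    proof -
      have "\<exists>x D. (s, D) \<in> M \<and> x \<in> D \<inter> X" using hit[OF X, of s] that by blast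
      then show ?thesis unfolding f_def by (rule someI_ex)
    qed
    have "inj_on f (Shat - X)"
    proof (rule inj_onI)
      fix s s' assume ss: "s \<in> Shat - X" "s' \<in> Shat - X" "f s = f s'"
      obtain D where D: "(s, D) \<in> M" "f s \<in> D \<inter> X" using fP ss(1) by blast
      obtain D' where D': "(s', D') \<in> M" "f s' \<in> D' \<inter> X" using fP ss(2) by blast
      have "D \<in> Cs" "D' \<in> Cs" using D D' Msub by auto
      then have "D = D'" using comp_disj[OF symG' Cs_comp Cs_comp, of D D' "f s"] D(2) D'(2) ss(3) by auto
      then have "snd (s, D) = snd (s', D')" by simp
      moreover have "(s, D) \<in> M'" "(s', D') \<in> M'" using D D' ss by (auto simp: M'_def)
      ultimately show "s = s'" using injM' by (metis inj_on_contraD prod.inject)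
    qed
    moreover have "f ` (Shat - X) \<subseteq> X \<inter> VC"
    proof
      fix x assume "x \<in> f ` (Shat - X)"
      then obtain s where s: "s \<in> Shat - X" "x = f s" by blast
      obtain D where D: "(s, D) \<in> M" "f s \<in> D \<inter> X" using fP s(1) by blast
      have "D \<in> Chat" using M'Chat D(1) s(1) by blast
      then show "x \<in> X \<inter> VC" using D s by (auto simp: VC_def)
    qed
    moreover have "finite (X \<inter> VC)" using X fin finite_subset by blast
    ultimately show ?thesis by (rule card_inj_on_le)
  qed
  have VCS: "VC \<inter> S = {}" using Cs_sub Chat_Cs by (auto simp: VC_def)
  have pitY: "pit_graph (del_verts G (Shat \<union> (X - VC - Shat)))"
    if X: "X \<subseteq> verts G" "pit_graph (del_verts G X)" for X
  proof -
    define Y where "Y = Shat \<union> (X - VC - Shat)"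
    define HY where "HY = induced G (verts G - Y)"
    define HX where "HX = induced G (verts G - X)"
    have pitHX: "pit_graph HX" using X(2) by (simp add: HX_def del_verts_def)
    have symHY: "symp (adj HY)" unfolding HY_def by (rule symG)
    have notY: "u \<notin> X \<or> u \<in> VC" if "u \<notin> Y" for u using that by (auto simp: Y_def)
    have simpY: "simple HY"
      unfolding simple_def
    proof (intro allI)
      fix u v
      show "mult HY u v \<le> 1"
      proof (cases "u \<in> verts G - Y \<and> v \<in> verts G - Y \<and> mult G u v > 0")
        case False
        then show ?thesis by (auto simp: HY_def mult_induced)
      next
        case True
        then have a: "adj G u v" by (simp add: adj_def)
        show ?thesis
        proof (cases "u \<notin> X \<and> v \<notin> X")
          case True
          then have "mult HX u v \<le> 1" using pitHX by (simp add: pit_graph_def simple_def)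
          then show ?thesis using True \<open>u \<in> verts G - Y \<and> v \<in> verts G - Y \<and> mult G u v > 0\<close>
            by (simp add: HX_def HY_def mult_induced)
        next
          case False
          then have uv: "u \<in> VC \<or> v \<in> VC" using notY True by blast
          have nS: "u \<notin> Shat" "v \<notin> Shat" using True by (auto simp: Y_def)
          have "\<exists>D. D \<in> Chat \<and> u \<in> D \<and> v \<in> D"
          proof (cases "u \<in> VC")
            case True
            then obtain D where D: "D \<in> Chat" "u \<in> D" by (auto simp: VC_def)
            have "v \<in> D" by (rule stay[OF D a nS(2)])
            then show ?thesis using D by blast
          next
            case False
            then have "v \<in> VC" using uv by blast
            then obtain D where D: "D \<in> Chat" "v \<in> D" by (auto simp: VC_def)
            have "u \<in> D" by (rule stay[OF D adjsym[OF a] nS(1)])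
            then show ?thesis using D by blast
          qed
          then obtain D where D: "D \<in> Chat" "u \<in> D" "v \<in> D" by blast
          have "simple G'" using pitG' by (simp add: pit_graph_def)
          then have "mult G' u v \<le> 1" by (simp add: simple_def)
          have e1: "mult HY u v = mult G u v"
            using \<open>u \<in> verts G - Y \<and> v \<in> verts G - Y \<and> mult G u v > 0\<close> by (simp add: HY_def mult_induced)
          have "u \<in> verts G - S" "v \<in> verts G - S" using D Cs_sub[OF Chat_Cs[OF D(1)]] by blast+
          then have e2: "mult G' u v = mult G u v" by (simp add: G'_def mult_induced)
          show ?thesis using \<open>mult G' u v \<le> 1\<close> e1 e2 by simp
        qed
      qed
    qed
    have comps: "proper_interval (induced HY K) \<or> is_tree (induced HY K)" if K: "K \<in> components HY" for K
    proof -
      obtain u where u: "u \<in> verts HY" "K = {v. reach HY u v}" using K by (auto simp: components_def)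
      have KHY: "K \<subseteq> verts G - Y" using comp_sub[OF K] by (auto simp: HY_def)
      show ?thesis
      proof (cases "u \<in> VC")
        case True
        then obtain D where D: "D \<in> Chat" "u \<in> D" by (auto simp: VC_def)
        have "K \<subseteq> D"
        proof
          fix v assume "v \<in> K"
          then have "(adj HY)\<^sup>*\<^sup>* u v" using u by (simp add: reach_def)
          then show "v \<in> D"
          proof (rule rt_closed[where P="\<lambda>v. v \<in> D"])
            show "u \<in> D" by (rule D(2))
            fix y z assume "y \<in> D" "adj HY y z"
            then show "z \<in> D" using stay[OF D(1) \<open>y \<in> D\<close>] by (auto simp: HY_def Y_def)
          qed
        qed
        have "proper_interval (induced (induced G' D) K)"
          by (rule pi_hered[OF Cs_pi[OF Chat_Cs[OF D(1)]]])
        moreover have "induced (induced G' D) K = induced HY K"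
        proof -
          have "(verts G - S) \<inter> D \<inter> K = (verts G - Y) \<inter> K"
            using \<open>K \<subseteq> D\<close> KHY Cs_sub[OF Chat_Cs[OF D(1)]] by blast
          then show ?thesis unfolding G'_def HY_def induced_induced by simp
        qed
        ultimately show ?thesis by simp
      next
        case False
        have uHX: "u \<in> verts HX" using u False notY by (auto simp: HY_def HX_def)
        define K' where "K' = {v. reach HX u v}"
        have K': "K' \<in> components HX" unfolding K'_def by (rule comp_of[OF uHX])
        have "K \<subseteq> K'"
        proof
          fix v assume "v \<in> K"
          then have "(adj HY)\<^sup>*\<^sup>* u v" using u by (simp add: reach_def)
          then have "v \<notin> VC \<and> (adj HX)\<^sup>*\<^sup>* u v"
          proof (rule rt_closed[where P="\<lambda>v. v \<notin> VC \<and> (adj HX)\<^sup>*\<^sup>* u v"])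
            show "u \<notin> VC \<and> (adj HX)\<^sup>*\<^sup>* u u" using False by simp
            fix y z assume y: "y \<notin> VC \<and> (adj HX)\<^sup>*\<^sup>* u y" and yz: "adj HY y z"
            have yzG: "adj G y z" "y \<notin> Y" "z \<notin> Y" using yz by (auto simp: HY_def)
            have "z \<notin> VC"
            proof
              assume "z \<in> VC"
              then obtain D where D: "D \<in> Chat" "z \<in> D" by (auto simp: VC_def)
              have "y \<in> D" using stay[OF D adjsym[OF yzG(1)]] yzG(2) by (auto simp: Y_def)
              then show False using y D(1) by (auto simp: VC_def)
            qed
            moreover have "adj HX y z" using yzG y \<open>z \<notin> VC\<close> notY adj_verts[OF yzG(1)] by (auto simp: HX_def)
            ultimately show "z \<notin> VC \<and> (adj HX)\<^sup>*\<^sup>* u z" using y by auto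
          qed
          then show "v \<in> K'" using uHX by (simp add: K'_def reach_def)
        qed
        have KK': "(verts G - X) \<inter> K' \<inter> K = (verts G - Y) \<inter> K"
          using \<open>K \<subseteq> K'\<close> KHY comp_sub[OF K'] by (auto simp: HX_def)
        from pitHX K' have "proper_interval (induced HX K') \<or> is_tree (induced HX K')"
          by (simp add: pit_graph_def)
        then show ?thesis
        proof
          assume "proper_interval (induced HX K')"
          then have "proper_interval (induced (induced HX K') K)" by (rule pi_hered)
          then show ?thesis unfolding HX_def HY_def induced_induced KK' by simp
        next
          assume tr: "is_tree (induced HX K')"
          have "is_tree (induced G ((verts G - Y) \<inter> K))"
          proof (rule tree_hered)
            show "is_tree (induced G ((verts G - X) \<inter> K'))" using tr by (simp add: HX_def induced_induced)
            show "(verts G - Y) \<inter> K \<subseteq> (verts G - X) \<inter> K'" using KK' by blast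
            show "connected_graph (induced G ((verts G - Y) \<inter> K))"
              using comp_connected[OF symHY K] by (simp add: HY_def induced_induced)
          qed
          then show ?thesis by (simp add: HY_def induced_induced)
        qed
      qed
    qed
    show ?thesis unfolding Y_def[symmetric] del_verts_def HY_def[symmetric] pit_graph_def
      using simpY comps by blast
  qed
  show ?thesis
  proof
    assume "PITVD G k"
    then obtain X where X: "X \<subseteq> verts G" "int (card X) \<le> k" "pit_graph (del_verts G X)"
      unfolding PITVD_def by blast
    define X' where "X' = X - VC - Shat"
    have finX: "finite X" using X(1) fin finite_subset by blast
    have c1: "card X = card X' + card (X \<inter> VC) + card (X \<inter> Shat)"
    proof -
      have "X = X' \<union> (X \<inter> VC) \<union> (X \<inter> Shat)" by (auto simp: X'_def)
      moreover have "card (X' \<union> (X \<inter> VC) \<union> (X \<inter> Shat)) = card (X' \<union> (X \<inter> VC)) + card (X \<inter> Shat)"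
        by (rule card_Un_disjoint) (use finX VCS assms(7) in \<open>auto simp: X'_def\<close>)
      moreover have "card (X' \<union> (X \<inter> VC)) = card X' + card (X \<inter> VC)"
        by (rule card_Un_disjoint) (use finX in \<open>auto simp: X'_def\<close>)
      ultimately show ?thesis by simp
    qed
    have c2: "card Shat = card (Shat - X) + card (X \<inter> Shat)"
      using card_Int_Diff[OF finShat, of X] by (simp add: Int_commute)
    have c3: "card (Shat - X) \<le> card (X \<inter> VC)" by (rule card_bound[OF X(1) X(3)])
    have "X' \<subseteq> verts (del_verts G Shat)" using X(1) by (auto simp: X'_def del_verts_def)
    moreover have "int (card X') \<le> k - int (card Shat)" using c1 c2 c3 X(2) by linarith
    moreover have "pit_graph (del_verts (del_verts G Shat) X')"
      unfolding del_del X'_def by (rule pitY[OF X(1) X(3)])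
    ultimately show "PITVD (del_verts G Shat) (k - int (card Shat))" unfolding PITVD_def by blast
  next
    assume "PITVD (del_verts G Shat) (k - int (card Shat))"
    then obtain X' where X': "X' \<subseteq> verts (del_verts G Shat)" "int (card X') \<le> k - int (card Shat)"
      "pit_graph (del_verts (del_verts G Shat) X')"
      unfolding PITVD_def by blast
    have "Shat \<union> X' \<subseteq> verts G" using X' assms(2,7) by (auto simp: del_verts_def)
    moreover have "int (card (Shat \<union> X')) \<le> k" using card_Un_le[of Shat X'] X'(2) by linarith
    moreover have "pit_graph (del_verts G (Shat \<union> X'))" using X'(3) by (simp add: del_del)
    ultimately show "PITVD G k" unfolding PITVD_def by blast
  qed
qed

end
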